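(* Let $(E,\mathcal{I}_1),\dots,(E,\mathcal{I}_k)$ be matroids on a common finite ground set $E$ with $|E|=\sum_{i\in[k]}\mathrm{rank}(\mathcal{I}_i)$, let $w_i:E\to\mathbb{R}_+$ be weights, and let $\mathrm{Op}^{(1)},\mathrm{Op}^{(2)}\in\{\max,\min,\sum\}$. Let $w^{\max}=\max_{i\in[k]}\max_{e\in E}w_i(e)$, define $\widetilde{\min}=\max$, $\widetilde{\max}=\min$, $\widetilde{\sum}=\sum$, and define $w_i'(e)=\frac{|E|}{\mathrm{rank}(\mathcal{I}_i)}w^{\max}-w_i(e)$ if $\mathrm{Op}^{(1)}\in\{\min,\max\}$ and $\mathrm{Op}^{(2)}=\sum$, and $w_i'(e)=w^{\max}-w_i(e)$ otherwise. Then a feasible partition $(I_1,\dots,I_k)$ of $E$ is an optimal solution of the minimum $(\mathrm{Op}^{(1)},\mathrm{Op}^{(2)})$-value matroid partitioning problem for $(E,(\mathcal{I}_i,w_i)_{i\in[k]})$ if and only if it is an optimal solution of the maximum $(\widetilde{\mathrm{Op}^{(1)}},\widetilde{\mathrm{Op}^{(2)}})$-value matroid partitioning problem for $(E,(\mathcal{I}_i,w_i')_{i\in[k]})$.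
   Context: A feasible partition of $E$ with respect to matroids $(E,\mathcal{I}_i)$, $i\in[k]$, is a tuple $(I_1,\dots,I_k)$ of pairwise disjoint nonempty sets with $\bigcup_i I_i=E$ and $I_i\in\mathcal{I}_i$. The $(\mathrm{Op}^{(1)},\mathrm{Op}^{(2)})$-value of $(I_1,\dots,I_k)$ is $\mathrm{Op}^{(1)}_{i\in[k]}\mathrm{Op}^{(2)}_{e\in I_i}w_i(e)$. The minimum (resp. maximum) $(\mathrm{Op}^{(1)},\mathrm{Op}^{(2)})$-value matroid partitioning problem asks for a feasible partition minimizing (resp. maximizing) this value. Under $|E|=\sum_i\mathrm{rank}(\mathcal{I}_i)$ every feasible partition consists of bases. *)

theory Defs
  imports Complex_Main
begin

definition matroid :: "'a set \<Rightarrow> ('a set \<Rightarrow> bool) \<Rightarrow> bool" where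
  "matroid E indep \<longleftrightarrow> finite E
     \<and> (\<forall>X. indep X \<longrightarrow> X \<subseteq> E)
     \<and> indep {}
     \<and> (\<forall>X Y. indep X \<and> Y \<subseteq> X \<longrightarrow> indep Y)
     \<and> (\<forall>X Y. indep X \<and> indep Y \<and> card X < card Y \<longrightarrow> (\<exists>e\<in>Y - X. indep (insert e X)))"

definition mrank :: "('a set \<Rightarrow> bool) \<Rightarrow> nat" where
  "mrank indep = Max {card X | X. indep X}"

datatype op = OMax | OMin | OSum

fun apply_op :: "op \<Rightarrow> 'b set \<Rightarrow> ('b \<Rightarrow> real) \<Rightarrow> real" where
  "apply_op OMax A f = Max (f ` A)"
| "apply_op OMin A f = Min (f ` A)"
| "apply_op OSum A f = sum f A"

fun op_tilde :: "op \<Rightarrow> op" where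
  "op_tilde OMin = OMax"
| "op_tilde OMax = OMin"
| "op_tilde OSum = OSum"

text \<open>Feasible partition of E w.r.t. matroids indexed by [k] = {0..<k}.\<close>
definition feasible_partition ::
  "nat \<Rightarrow> 'a set \<Rightarrow> (nat \<Rightarrow> 'a set \<Rightarrow> bool) \<Rightarrow> (nat \<Rightarrow> 'a set) \<Rightarrow> bool" where
  "feasible_partition k E indep I \<longleftrightarrow>
     (\<forall>i<k. \<forall>j<k. i \<noteq> j \<longrightarrow> I i \<inter> I j = {})
     \<and> (\<forall>i<k. I i \<noteq> {})
     \<and> (\<Union>i<k. I i) = E
     \<and> (\<forall>i<k. indep i (I i))"

definition part_value ::
  "op \<Rightarrow> op \<Rightarrow> nat \<Rightarrow> (nat \<Rightarrow> 'a \<Rightarrow> real) \<Rightarrow> (nat \<Rightarrow> 'a set) \<Rightarrow> real" where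
  "part_value op1 op2 k w I = apply_op op1 {..<k} (\<lambda>i. apply_op op2 (I i) (w i))"

definition min_optimal ::
  "op \<Rightarrow> op \<Rightarrow> nat \<Rightarrow> 'a set \<Rightarrow> (nat \<Rightarrow> 'a set \<Rightarrow> bool) \<Rightarrow> (nat \<Rightarrow> 'a \<Rightarrow> real)
     \<Rightarrow> (nat \<Rightarrow> 'a set) \<Rightarrow> bool" where
  "min_optimal op1 op2 k E indep w I \<longleftrightarrow> feasible_partition k E indep I
     \<and> (\<forall>J. feasible_partition k E indep J \<longrightarrow> part_value op1 op2 k w I \<le> part_value op1 op2 k w J)"

definition max_optimal ::
  "op \<Rightarrow> op \<Rightarrow> nat \<Rightarrow> 'a set \<Rightarrow> (nat \<Rightarrow> 'a set \<Rightarrow> bool) \<Rightarrow> (nat \<Rightarrow> 'a \<Rightarrow> real)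
     \<Rightarrow> (nat \<Rightarrow> 'a set) \<Rightarrow> bool" where
  "max_optimal op1 op2 k E indep w I \<longleftrightarrow> feasible_partition k E indep I
     \<and> (\<forall>J. feasible_partition k E indep J \<longrightarrow> part_value op1 op2 k w J \<le> part_value op1 op2 k w I)"

end

theory Submission
  imports Defs
begin

lemma min_neg:
  fixes f :: "'a \<Rightarrow> real"
  assumes "finite A" "A \<noteq> {}"
  shows "Min ((\<lambda>x. c - f x) ` A) = c - Max (f ` A)"
proof -
  obtain a where a: "a \<in> A" "f a = Max (f ` A)"
  proof -
    have "Max (f ` A) \<in> f ` A" using assms by (intro Max_in) auto
    thus ?thesis using that by (metis imageE)
  qed
  show ?thesis
  proof (rule Min_eqI)
    show "finite ((\<lambda>x. c - f x) ` A)" using assms by simp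
    show "\<And>y. y \<in> (\<lambda>x. c - f x) ` A \<Longrightarrow> c - Max (f ` A) \<le> y"
    proof -
      fix y assume "y \<in> (\<lambda>x. c - f x) ` A"
      then obtain x where x: "x \<in> A" "y = c - f x" by blast
      have "f x \<le> Max (f ` A)" using assms(1) x(1) by simp
      thus "c - Max (f ` A) \<le> y" using x(2) by linarith
    qed
    show "c - Max (f ` A) \<in> (\<lambda>x. c - f x) ` A" using a by (simp add: image_iff) (metis)
  qed
qed

lemma max_neg:
  fixes f :: "'a \<Rightarrow> real"
  assumes "finite A" "A \<noteq> {}"
  shows "Max ((\<lambda>x. c - f x) ` A) = c - Min (f ` A)"
proof -
  obtain a where a: "a \<in> A" "f a = Min (f ` A)"
  proof -
    have "Min (f ` A) \<in> f ` A" using assms by (intro Min_in) auto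
    thus ?thesis using that by (metis imageE)
  qed
  show ?thesis
  proof (rule Max_eqI)
    show "finite ((\<lambda>x. c - f x) ` A)" using assms by simp
    show "\<And>y. y \<in> (\<lambda>x. c - f x) ` A \<Longrightarrow> y \<le> c - Min (f ` A)"
    proof -
      fix y assume "y \<in> (\<lambda>x. c - f x) ` A"
      then obtain x where x: "x \<in> A" "y = c - f x" by blast
      have "Min (f ` A) \<le> f x" using assms(1) x(1) by simp
      thus "y \<le> c - Min (f ` A)" using x(2) by linarith
    qed
    show "c - Min (f ` A) \<in> (\<lambda>x. c - f x) ` A" using a by (simp add: image_iff) (metis)
  qed
qed

lemma card_le_mrank:
  assumes "matroid E ind" "ind X"
  shows "card X \<le> mrank ind"
proof -
  have fE: "finite E" and sub: "\<And>X. ind X \<Longrightarrow> X \<subseteq> E" using assms(1) unfolding matroid_def by auto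
  have "{card X | X. ind X} \<subseteq> card ` Pow E" using sub by auto
  hence "finite {card X | X. ind X}" using fE by (simp add: finite_subset)
  thus ?thesis unfolding mrank_def using assms(2) by (intro Max_ge) auto
qed

theorem mainTheorem2:
  fixes E :: "'a set" and k :: nat
    and indep :: "nat \<Rightarrow> 'a set \<Rightarrow> bool"
    and w :: "nat \<Rightarrow> 'a \<Rightarrow> real"
    and op1 op2 :: op
    and I :: "nat \<Rightarrow> 'a set"
  assumes fin: "finite E"
    and mat: "\<And>i. i < k \<Longrightarrow> matroid E (indep i)"
    and card_E: "card E = (\<Sum>i<k. mrank (indep i))"
    and w_nonneg: "\<And>i e. i < k \<Longrightarrow> e \<in> E \<Longrightarrow> w i e \<ge> 0"
  defines "wmax \<equiv> Max {w i e | i e. i < k \<and> e \<in> E}"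
  defines "w' \<equiv> (\<lambda>i e. if op1 \<in> {OMin, OMax} \<and> op2 = OSum
                         then real (card E) / real (mrank (indep i)) * wmax - w i e
                         else wmax - w i e)"
  shows "min_optimal op1 op2 k E indep w I \<longleftrightarrow>
         max_optimal (op_tilde op1) (op_tilde op2) k E indep w' I"
proof -
  let ?fp = "feasible_partition k E indep"
  let ?v = "part_value op1 op2 k w"
  let ?tv = "part_value (op_tilde op1) (op_tilde op2) k w'"
  define r where "r i = mrank (indep i)" for i
  have bases: "finite (J i) \<and> J i \<noteq> {} \<and> card (J i) = r i"
    if fp: "?fp J" and i: "i < k" for J i
  proof -
    have disj: "\<forall>i<k. \<forall>j<k. i \<noteq> j \<longrightarrow> J i \<inter> J j = {}" and ne: "\<forall>i<k. J i \<noteq> {}"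
      and un: "(\<Union>i<k. J i) = E" and ind: "\<forall>i<k. indep i (J i)"
      using fp unfolding feasible_partition_def by auto
    have finJ: "\<And>i. i < k \<Longrightarrow> finite (J i)"
    proof -
      fix i assume "i < k"
      hence "J i \<subseteq> E" using un by blast
      thus "finite (J i)" using fin finite_subset by blast
    qed
    have le: "card (J i) \<le> r i" if "i < k" for i
      unfolding r_def using card_le_mrank[OF mat[OF that]] ind that by blast
    have "card E = (\<Sum>i<k. card (J i))"
      using un finJ disj by (metis card_UN_disjoint finite_lessThan lessThan_iff)
    hence eq: "(\<Sum>i<k. card (J i)) = (\<Sum>i<k. r i)" using card_E r_def by simp
    have "card (J i) = r i"
    proof (rule ccontr)
      assume "card (J i) \<noteq> r i"
      hence "card (J i) < r i" using le i by (meson le_neq_implies_less)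
      hence "(\<Sum>i<k. card (J i)) < (\<Sum>i<k. r i)"
        using le i by (intro sum_strict_mono_ex1) auto
      thus False using eq by simp
    qed
    thus ?thesis using finJ ne i by auto
  qed
  have sumr: "(\<Sum>i<k. real (r i)) = real (card E)" unfolding r_def card_E by simp
  show ?thesis
  proof (cases "k = 0")
    case True
    have "part_value o1 o2 k u J = part_value o1 o2 k u K" for o1 o2 u and J K :: "nat \<Rightarrow> 'a set"
      using True by (cases o1) (simp_all add: part_value_def)
    thus ?thesis unfolding min_optimal_def max_optimal_def by (metis order_refl)
  next
    case False
    hence kne: "{..<k} \<noteq> {}" by auto
    define c2 where "c2 i = (if op2 = OSum then (if op1 \<in> {OMin, OMax} then real (card E) * wmax
       else real (r i) * wmax) else wmax)" for i
    define C where "C = (if op1 = OSum then (\<Sum>i<k. c2 i) else c2 0)"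
    have inner: "apply_op (op_tilde op2) (J i) (w' i) = c2 i - apply_op op2 (J i) (w i)"
      if fp: "?fp J" and i: "i < k" for J i
    proof -
      have b: "finite (J i)" "J i \<noteq> {}" "card (J i) = r i" using bases[OF fp i] by auto
      hence rpos: "real (r i) \<noteq> 0" by auto
      show ?thesis
      proof (cases op2)
        case OMax
        then show ?thesis using b min_neg[of "J i" wmax "w i"]
          by (simp add: w'_def c2_def)
      next
        case OMin
        then show ?thesis using b max_neg[of "J i" wmax "w i"]
          by (simp add: w'_def c2_def)
      next
        case OSum
        show ?thesis
        proof (cases "op1 \<in> {OMin, OMax}")
          case True
          have "apply_op (op_tilde op2) (J i) (w' i)
              = (\<Sum>e\<in>J i. real (card E) / real (r i) * wmax - w i e)"
            using OSum True by (simp add: w'_def r_def)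
          also have "\<dots> = real (r i) * (real (card E) / real (r i) * wmax) - sum (w i) (J i)"
            using b by (simp add: sum_subtractf)
          also have "\<dots> = c2 i - apply_op op2 (J i) (w i)"
            using rpos OSum True by (simp add: c2_def)
          finally show ?thesis .
        next
          case False
          then show ?thesis using OSum b by (simp add: w'_def c2_def sum_subtractf)
        qed
      qed
    qed
    have key: "?tv J = C - ?v J" if fp: "?fp J" for J
    proof -
      have "?tv J = apply_op (op_tilde op1) {..<k} (\<lambda>i. c2 i - apply_op op2 (J i) (w i))"
        unfolding part_value_def using inner[OF fp]
        by (cases "op_tilde op1") (auto intro!: image_cong sum.cong)
      also have "\<dots> = C - ?v J"
      proof (cases op1)
        case OMax
        let ?g = "\<lambda>i. apply_op op2 (J i) (w i)"
        have e: "(\<lambda>i. c2 i - ?g i) = (\<lambda>i. c2 0 - ?g i)"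
          by (rule ext) (simp add: c2_def OMax)
        have "apply_op (op_tilde op1) {..<k} (\<lambda>i. c2 i - ?g i) = Min ((\<lambda>i. c2 0 - ?g i) ` {..<k})"
          using OMax e by simp
        also have "\<dots> = c2 0 - Max (?g ` {..<k})"
          by (rule min_neg) (use kne in auto)
        also have "\<dots> = C - ?v J" using OMax by (simp add: C_def part_value_def)
        finally show ?thesis .
      next
        case OMin
        let ?g = "\<lambda>i. apply_op op2 (J i) (w i)"
        have e: "(\<lambda>i. c2 i - ?g i) = (\<lambda>i. c2 0 - ?g i)"
          by (rule ext) (simp add: c2_def OMin)
        have "apply_op (op_tilde op1) {..<k} (\<lambda>i. c2 i - ?g i) = Max ((\<lambda>i. c2 0 - ?g i) ` {..<k})"
          using OMin e by simp
        also have "\<dots> = c2 0 - Min (?g ` {..<k})"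
          by (rule max_neg) (use kne in auto)
        also have "\<dots> = C - ?v J" using OMin by (simp add: C_def part_value_def)
        finally show ?thesis .
      next
        case OSum
        then show ?thesis by (simp add: C_def part_value_def sum_subtractf)
      qed
      finally show ?thesis .
    qed
    have "(\<forall>J. ?fp J \<longrightarrow> ?v I \<le> ?v J) \<longleftrightarrow> (\<forall>J. ?fp J \<longrightarrow> ?tv J \<le> ?tv I)"
      if fpI: "?fp I"
    proof -
      have "?fp J \<longrightarrow> ?v I \<le> ?v J \<longleftrightarrow> ?fp J \<longrightarrow> ?tv J \<le> ?tv I" for J
        using key[of J] key[OF fpI] by auto
      thus ?thesis by blast
    qed
    thus ?thesis unfolding min_optimal_def max_optimal_def by blast
  qed
qed

end
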